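(* Let $\Sigma_1\subset E(1,1)$ be a regular surface. At every non-characteristic point of $\Sigma_1$, the Riemannian mean curvature $\mathcal H_L$ of $\Sigma_1$ in $(E(1,1),g_L)$ satisfies $$\lim_{L\to+\infty}\mathcal H_L=X_1(\bar p)+X_2(\bar q).$$
   Context: $E(1,1)$ is modelled on $\mathbb R^3$ with coordinates $(x_1,x_2,x_3)$ and vector fields $X_1=\partial_{x_3}$, $X_2=\frac{1}{\sqrt2}(-e^{x_3}\partial_{x_1}+e^{-x_3}\partial_{x_2})$, $X_3=-\frac1{\sqrt2}(e^{x_3}\partial_{x_1}+e^{-x_3}\partial_{x_2})$, dual forms $\omega_1=dx_3$, $\omega_2=\frac1{\sqrt2}(-e^{-x_3}dx_1+e^{x_3}dx_2)$, $\omega=-\frac1{\sqrt2}(e^{-x_3}dx_1+e^{x_3}dx_2)$. For $L>0$, $g_L=\omega_1\otimes\omega_1+\omega_2\otimes\omega_2+L\,\omega\otimes\omega$ (so $X_1,X_2,\widetilde X_3:=L^{-1/2}X_3$ is orthonormal), $\nabla^L$ its Levi-Civita connection. A regular surface is a Euclidean $C^2$-smooth compact oriented surface $\Sigma_1=\{u=0\}$ with $u$ Euclidean $C^2$ and nonvanishing Euclidean gradient. Put $p=X_1u$, $q=X_2u$, $r=\widetilde X_3u$, $l=\sqrt{p^2+q^2}$, $l_L=\sqrt{p^2+q^2+r^2}$, $\bar p=p/l$, $\bar q=q/l$, $\bar p_L=p/l_L$, $\bar q_L=q/l_L$, $\bar r_L=r/l_L$; non-characteristic means $l\ne0$. There $v_L=\bar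 p_LX_1+\bar q_LX_2+\bar r_L\widetilde X_3$ is the unit normal, $e_1=\bar qX_1-\bar pX_2$, $e_2=\bar r_L\bar pX_1+\bar r_L\bar qX_2-\frac l{l_L}\widetilde X_3$ an orthonormal tangent frame, and $\mathcal H_L=\langle\nabla^L_{e_1}v_L,e_1\rangle_L+\langle\nabla^L_{e_2}v_L,e_2\rangle_L$. *)

theory Defs
  imports "HOL-Analysis.Analysis"
begin

text \<open>The Lie group E(1,1) modelled on real^3, coordinates x$1, x$2, x$3.\<close>

type_synonym pt = "real ^ 3"

definition vec3 :: "real \<Rightarrow> real \<Rightarrow> real \<Rightarrow> pt" where
  "vec3 a b c = (\<chi> i. if i = 1 then a else if i = 2 then b else c)"

text \<open>Left-invariant vector fields, as coordinate vectors at each point.\<close>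
definition X1 :: "pt \<Rightarrow> pt" where "X1 x = vec3 0 0 1"
definition X2 :: "pt \<Rightarrow> pt" where
  "X2 x = vec3 (- exp (x$3) / sqrt 2) (exp (- x$3) / sqrt 2) 0"
definition X3 :: "pt \<Rightarrow> pt" where
  "X3 x = vec3 (- exp (x$3) / sqrt 2) (- exp (- x$3) / sqrt 2) 0"
definition X3t :: "real \<Rightarrow> pt \<Rightarrow> pt" where
  "X3t L x = (1 / sqrt L) *\<^sub>R X3 x"

definition om1 :: "pt \<Rightarrow> pt \<Rightarrow> real" where "om1 x v = v$3"
definition om2 :: "pt \<Rightarrow> pt \<Rightarrow> real" where
  "om2 x v = (- exp (- x$3) * v$1 + exp (x$3) * v$2) / sqrt 2"
definition om :: "pt \<Rightarrow> pt \<Rightarrow> real" where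
  "om x v = - (exp (- x$3) * v$1 + exp (x$3) * v$2) / sqrt 2"

definition gL :: "real \<Rightarrow> pt \<Rightarrow> pt \<Rightarrow> pt \<Rightarrow> real" where
  "gL L x v w = om1 x v * om1 x w + om2 x v * om2 x w + L * om x v * om x w"

definition gmat :: "real \<Rightarrow> pt \<Rightarrow> real ^ 3 ^ 3" where
  "gmat L x = (\<chi> i j. gL L x (axis i 1) (axis j 1))"

definition ginv :: "real \<Rightarrow> pt \<Rightarrow> real ^ 3 ^ 3" where
  "ginv L x = matrix_inv (gmat L x)"

definition dd :: "(pt \<Rightarrow> 'b::real_normed_vector) \<Rightarrow> pt \<Rightarrow> pt \<Rightarrow> 'b" where
  "dd f x v = frechet_derivative f (at x) v"

definition Christoffel :: "real \<Rightarrow> pt \<Rightarrow> 3 \<Rightarrow> 3 \<Rightarrow> 3 \<Rightarrow> real" where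
  "Christoffel L x k i j =
     (\<Sum>l\<in>UNIV. (1/2) * ginv L x $ k $ l *
        (dd (\<lambda>y. gmat L y $ j $ l) x (axis i 1)
       + dd (\<lambda>y. gmat L y $ i $ l) x (axis j 1)
       - dd (\<lambda>y. gmat L y $ i $ j) x (axis l 1)))"

definition nablaL :: "real \<Rightarrow> (pt \<Rightarrow> pt) \<Rightarrow> (pt \<Rightarrow> pt) \<Rightarrow> pt \<Rightarrow> pt" where
  "nablaL L Y Z x = dd Z x (Y x)
     + (\<chi> k. \<Sum>i\<in>UNIV. \<Sum>j\<in>UNIV. Christoffel L x k i j * (Y x)$i * (Z x)$j)"

definition C2 :: "(pt \<Rightarrow> real) \<Rightarrow> bool" where
  "C2 u \<longleftrightarrow> (\<exists>G M. (\<forall>x. (u has_derivative (\<lambda>h. G x \<bullet> h)) (at x))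
                  \<and> (\<forall>x. (G has_derivative (\<lambda>h. M x *v h)) (at x))
                  \<and> continuous_on UNIV M)"

definition regular_surface_fn :: "(pt \<Rightarrow> real) \<Rightarrow> bool" where
  "regular_surface_fn u \<longleftrightarrow> C2 u \<and> compact {x. u x = 0}
     \<and> (\<forall>x. u x = 0 \<longrightarrow> frechet_derivative u (at x) \<noteq> (\<lambda>h. 0))"

definition pp :: "(pt \<Rightarrow> real) \<Rightarrow> pt \<Rightarrow> real" where "pp u x = dd u x (X1 x)"
definition qq :: "(pt \<Rightarrow> real) \<Rightarrow> pt \<Rightarrow> real" where "qq u x = dd u x (X2 x)"
definition rr :: "real \<Rightarrow> (pt \<Rightarrow> real) \<Rightarrow> pt \<Rightarrow> real" where "rr L u x = dd u x (X3t L x)"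
definition ll :: "(pt \<Rightarrow> real) \<Rightarrow> pt \<Rightarrow> real" where
  "ll u x = sqrt ((pp u x)\<^sup>2 + (qq u x)\<^sup>2)"
definition lL :: "real \<Rightarrow> (pt \<Rightarrow> real) \<Rightarrow> pt \<Rightarrow> real" where
  "lL L u x = sqrt ((pp u x)\<^sup>2 + (qq u x)\<^sup>2 + (rr L u x)\<^sup>2)"
definition pbar :: "(pt \<Rightarrow> real) \<Rightarrow> pt \<Rightarrow> real" where "pbar u x = pp u x / ll u x"
definition qbar :: "(pt \<Rightarrow> real) \<Rightarrow> pt \<Rightarrow> real" where "qbar u x = qq u x / ll u x"
definition pbarL :: "real \<Rightarrow> (pt \<Rightarrow> real) \<Rightarrow> pt \<Rightarrow> real" where "pbarL L u x = pp u x / lL L u x"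
definition qbarL :: "real \<Rightarrow> (pt \<Rightarrow> real) \<Rightarrow> pt \<Rightarrow> real" where "qbarL L u x = qq u x / lL L u x"
definition rbarL :: "real \<Rightarrow> (pt \<Rightarrow> real) \<Rightarrow> pt \<Rightarrow> real" where "rbarL L u x = rr L u x / lL L u x"

text \<open>Unit normal and orthonormal tangent frame.\<close>
definition nuL :: "real \<Rightarrow> (pt \<Rightarrow> real) \<Rightarrow> pt \<Rightarrow> pt" where
  "nuL L u x = pbarL L u x *\<^sub>R X1 x + qbarL L u x *\<^sub>R X2 x + rbarL L u x *\<^sub>R X3t L x"
definition e1 :: "(pt \<Rightarrow> real) \<Rightarrow> pt \<Rightarrow> pt" where
  "e1 u x = qbar u x *\<^sub>R X1 x - pbar u x *\<^sub>R X2 x"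
definition e2 :: "real \<Rightarrow> (pt \<Rightarrow> real) \<Rightarrow> pt \<Rightarrow> pt" where
  "e2 L u x = (rbarL L u x * pbar u x) *\<^sub>R X1 x + (rbarL L u x * qbar u x) *\<^sub>R X2 x
              - (ll u x / lL L u x) *\<^sub>R X3t L x"

definition HL :: "real \<Rightarrow> (pt \<Rightarrow> real) \<Rightarrow> pt \<Rightarrow> real" where
  "HL L u x = gL L x (nablaL L (e1 u) (nuL L u) x) (e1 u x)
            + gL L x (nablaL L (e2 L u) (nuL L u) x) (e2 L u x)"

end

theory Submission
  imports Defs
begin


lemma vec3_nth [simp]: "vec3 a b c $ 1 = a" "vec3 a b c $ 2 = b" "vec3 a b c $ 3 = c"
  by (simp_all add: vec3_def)

definition fv :: "real \<Rightarrow> real \<Rightarrow> real \<Rightarrow> pt \<Rightarrow> pt" where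
  "fv c1 c2 c3 y = c1 *\<^sub>R X1 y + c2 *\<^sub>R X2 y + c3 *\<^sub>R X3 y"

lemma fv_nth3[simp]: "fv c1 c2 c3 y $ 3 = c1"
  by (simp add: fv_def X1_def X2_def X3_def)

lemma sqrt2_simps[simp]: "sqrt 2 * sqrt 2 = (2::real)" "sqrt 2 * (sqrt 2 * z) = (2::real) * z"
  by (simp_all add: mult.assoc[symmetric])

lemma gL_fv: "gL L y (fv c1 c2 c3 y) (fv d1 d2 d3 y) = c1*d1 + c2*d2 + L*c3*d3"
  unfolding gL_def om1_def om2_def om_def fv_def X1_def X2_def X3_def
  by (simp add: field_simps power2_eq_square exp_minus)

definition Bf :: "real \<Rightarrow> pt \<Rightarrow> pt \<Rightarrow> pt \<Rightarrow> real" where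
  "Bf L y v w = (1+L) * (exp (y$3) * exp (y$3) * (v$2) * (w$2) - (v$1) * (w$1) / (exp (y$3) * exp (y$3)))"

lemma Bf_fv: "Bf L y (fv c1 c2 c3 y) (fv d1 d2 d3 y) = - (1+L) * (c2*d3 + c3*d2)"
  unfolding Bf_def fv_def X1_def X2_def X3_def
  by (simp add: field_simps power2_eq_square exp_minus)

lemma Bf_sym: "Bf L y v w = Bf L y w v"
  unfolding Bf_def by (simp add: algebra_simps)

lemma has_derivative_nth3[derivative_intros]: "((\<lambda>y::pt. y$i) has_derivative (\<lambda>h. h$i)) F"
  by (rule bounded_linear_imp_has_derivative[OF bounded_linear_vec_nth])

lemma gL_deriv: "((\<lambda>y. gL L y v w) has_derivative (\<lambda>h. h$3 * Bf L y0 v w)) (at y0)"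
  unfolding gL_def om1_def om2_def om_def
  apply (rule derivative_eq_intros refl | simp)+
  apply (rule ext, simp add: Bf_def field_simps exp_minus power2_eq_square)
  done

lemma gmat_nth: "gmat L y $ j $ l = gL L y (axis j 1) (axis l 1)"
  by (simp add: gmat_def)

lemma dd_gmat: "dd (\<lambda>y. gmat L y $ j $ l) x h = h$3 * Bf L x (axis j 1) (axis l 1)"
proof -
  have "(\<lambda>h. h$3 * Bf L x (axis j 1) (axis l 1)) = frechet_derivative (\<lambda>y. gmat L y $ j $ l) (at x)"
    unfolding gmat_nth by (rule frechet_derivative_at[OF gL_deriv])
  then show ?thesis unfolding dd_def by metis
qed

lemma det_gmat: "det (gmat L x) = L"
  unfolding det_3 gmat_def gL_def om1_def om2_def om_def
  apply (simp add: axis_def)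
  apply (simp add: field_simps power2_eq_square exp_minus)
  done

lemma gL_inner: "gL L x v w = v \<bullet> (gmat L x *v w)"
  unfolding gmat_def gL_def om1_def om2_def om_def inner_vec_def matrix_vector_mult_def sum_3
  apply (simp add: axis_def)
  apply (simp add: field_simps)
  done

lemma gmat_sym: "transpose (gmat L x) = gmat L x"
  unfolding gmat_def transpose_def gL_def by (simp add: vec_eq_iff mult.commute)

lemma gL_add1: "gL L x (a + b) w = gL L x a w + gL L x b w"
  unfolding gL_def om1_def om2_def om_def by (simp add: field_simps)

lemma ginv_right: assumes "L \<noteq> 0" shows "gmat L x ** ginv L x = mat 1"
proof -
  have "invertible (gmat L x)" using assms by (simp add: invertible_det_nz det_gmat)
  then have "\<exists>A'. gmat L x ** A' = mat 1 \<and> A' ** gmat L x = mat 1" by (simp add: invertible_def)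
  then show ?thesis unfolding ginv_def matrix_inv_def by (metis (mono_tags, lifting) someI_ex)
qed

lemma conn:
  assumes "L \<noteq> 0"
  shows "gL L x (nablaL L Y Z x) W = gL L x (dd Z x (Y x)) W
     + (1/2)*((Y x)$3 * Bf L x (Z x) W + (Z x)$3 * Bf L x (Y x) W - W$3 * Bf L x (Y x) (Z x))"
proof -
  define T where "T = (\<chi> l. \<Sum>i\<in>UNIV. \<Sum>j\<in>UNIV. (1/2) * (dd (\<lambda>y. gmat L y $ j $ l) x (axis i 1)
       + dd (\<lambda>y. gmat L y $ i $ l) x (axis j 1)
       - dd (\<lambda>y. gmat L y $ i $ j) x (axis l 1)) * (Y x)$i * (Z x)$j)"
  have c: "(\<chi> k. \<Sum>i\<in>UNIV. \<Sum>j\<in>UNIV. Christoffel L x k i j * (Y x)$i * (Z x)$j) = ginv L x *v T"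
    unfolding Christoffel_def T_def matrix_vector_mult_def vec_eq_iff sum_3
    by (simp add: algebra_simps)
  have "gL L x (ginv L x *v T) W = (ginv L x *v T) \<bullet> (gmat L x *v W)" by (rule gL_inner)
  also have "\<dots> = ((ginv L x *v T) v* gmat L x) \<bullet> W" by (simp add: dot_lmul_matrix)
  also have "\<dots> = (gmat L x *v (ginv L x *v T)) \<bullet> W"
    by (metis gmat_sym transpose_matrix_vector)
  also have "\<dots> = T \<bullet> W" by (simp add: matrix_vector_mul_assoc ginv_right[OF assms])
  also have "\<dots> = (1/2)*((Y x)$3 * Bf L x (Z x) W + (Z x)$3 * Bf L x (Y x) W - W$3 * Bf L x (Y x) (Z x))"
    unfolding T_def inner_vec_def sum_3 dd_gmat Bf_def
    by (simp add: axis_def field_simps)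
  finally have e: "gL L x (ginv L x *v T) W = (1/2)*((Y x)$3 * Bf L x (Z x) W + (Z x)$3 * Bf L x (Y x) W - W$3 * Bf L x (Y x) (Z x))" .
  show ?thesis unfolding nablaL_def gL_add1 c e ..
qed



lemma vec3_decomp: "vec3 a b c = a *\<^sub>R vec3 1 0 0 + b *\<^sub>R vec3 0 1 0 + c *\<^sub>R vec3 0 0 1"
  by (simp add: vec_eq_iff forall_3)

lemma X1_deriv[derivative_intros]: "(X1 has_derivative (\<lambda>h. 0)) (at y)"
  unfolding X1_def[abs_def] by (rule has_derivative_const)

lemma X2_deriv: "(X2 has_derivative (\<lambda>h. h$3 *\<^sub>R X3 y)) (at y)"
proof -
  have e: "X2 = (\<lambda>y. (- exp (y$3) / sqrt 2) *\<^sub>R vec3 1 0 0 + (exp (- y$3) / sqrt 2) *\<^sub>R vec3 0 1 0)"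
    by (rule ext) (simp add: X2_def vec_eq_iff forall_3)
  show ?thesis unfolding e
    apply (rule derivative_eq_intros refl | simp)+
    apply (rule ext, simp add: X3_def vec_eq_iff forall_3)
    done
qed

lemma X3_deriv: "(X3 has_derivative (\<lambda>h. h$3 *\<^sub>R X2 y)) (at y)"
proof -
  have e: "X3 = (\<lambda>y. (- exp (y$3) / sqrt 2) *\<^sub>R vec3 1 0 0 + (- exp (- y$3) / sqrt 2) *\<^sub>R vec3 0 1 0)"
    by (rule ext) (simp add: X3_def vec_eq_iff forall_3)
  show ?thesis unfolding e
    apply (rule derivative_eq_intros refl | simp)+
    apply (rule ext, simp add: X2_def vec_eq_iff forall_3)
    done
qed

definition Pf :: "(pt \<Rightarrow> pt) \<Rightarrow> pt \<Rightarrow> real" where "Pf G y = G y \<bullet> X1 y"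
definition Qf :: "(pt \<Rightarrow> pt) \<Rightarrow> pt \<Rightarrow> real" where "Qf G y = G y \<bullet> X2 y"
definition Rf :: "(pt \<Rightarrow> pt) \<Rightarrow> pt \<Rightarrow> real" where "Rf G y = G y \<bullet> X3 y"
definition lamf :: "(pt \<Rightarrow> pt) \<Rightarrow> real \<Rightarrow> pt \<Rightarrow> real" where
  "lamf G s y = sqrt ((Pf G y)\<^sup>2 + (Qf G y)\<^sup>2 + (s * Rf G y)\<^sup>2)"

definition dPf :: "(pt \<Rightarrow> pt) \<Rightarrow> real^3^3 \<Rightarrow> pt \<Rightarrow> pt \<Rightarrow> real" where
  "dPf G Mx x h = (Mx *v h) \<bullet> X1 x"
definition dQf :: "(pt \<Rightarrow> pt) \<Rightarrow> real^3^3 \<Rightarrow> pt \<Rightarrow> pt \<Rightarrow> real" where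
  "dQf G Mx x h = (Mx *v h) \<bullet> X2 x + h$3 * Rf G x"
definition dRf :: "(pt \<Rightarrow> pt) \<Rightarrow> real^3^3 \<Rightarrow> pt \<Rightarrow> pt \<Rightarrow> real" where
  "dRf G Mx x h = (Mx *v h) \<bullet> X3 x + h$3 * Qf G x"

lemma Pf_deriv: assumes "(G has_derivative (\<lambda>h. Mx *v h)) (at x)"
  shows "(Pf G has_derivative dPf G Mx x) (at x)"
  unfolding Pf_def[abs_def] dPf_def[abs_def]
  by (rule derivative_eq_intros assms X1_deriv refl | simp)+

lemma Qf_deriv: assumes "(G has_derivative (\<lambda>h. Mx *v h)) (at x)"
  shows "(Qf G has_derivative dQf G Mx x) (at x)"
  unfolding Qf_def[abs_def] dQf_def[abs_def]
  apply (rule derivative_eq_intros assms X2_deriv refl)+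
  apply (rule ext, simp add: Rf_def algebra_simps)
  done

lemma Rf_deriv: assumes "(G has_derivative (\<lambda>h. Mx *v h)) (at x)"
  shows "(Rf G has_derivative dRf G Mx x) (at x)"
  unfolding Rf_def[abs_def] dRf_def[abs_def]
  apply (rule derivative_eq_intros assms X3_deriv refl)+
  apply (rule ext, simp add: Qf_def algebra_simps)
  done

lemma lamf_deriv: assumes "(G has_derivative (\<lambda>h. Mx *v h)) (at x)" and "lamf G s x > 0"
  shows "(lamf G s has_derivative (\<lambda>h. (Pf G x * dPf G Mx x h + Qf G x * dQf G Mx x h
         + s * s * Rf G x * dRf G Mx x h) / lamf G s x)) (at x)"
proof -
  have pos: "(Pf G x)\<^sup>2 + (Qf G x)\<^sup>2 + (s * Rf G x)\<^sup>2 > 0" using assms(2) unfolding lamf_def by simp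
  show ?thesis
  unfolding lamf_def[abs_def]
  apply (rule derivative_eq_intros Pf_deriv[OF assms(1)] Qf_deriv[OF assms(1)] Rf_deriv[OF assms(1)] refl pos)+
  apply (rule ext) using pos apply (simp add: field_simps power2_eq_square)
  done
qed

definition dquot :: "real \<Rightarrow> real \<Rightarrow> real \<Rightarrow> real \<Rightarrow> real" where
  "dquot f g a b = a / g - f * b / g^2"

lemma quot_deriv: assumes "(f has_derivative f') (at x)" "(g has_derivative g') (at x)" "g x \<noteq> 0"
  shows "((\<lambda>y. f y / g y) has_derivative (\<lambda>h. dquot (f x) (g x) (f' h) (g' h))) (at x)"
  apply (rule derivative_eq_intros assms refl)+
  apply (rule ext) using assms(3) apply (simp add: dquot_def field_simps power2_eq_square)
  done

definition Nuf :: "(pt \<Rightarrow> pt) \<Rightarrow> real \<Rightarrow> pt \<Rightarrow> pt" where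
  "Nuf G s y = (Pf G y / lamf G s y) *\<^sub>R X1 y + (Qf G y / lamf G s y) *\<^sub>R X2 y
     + (s * s * (Rf G y / lamf G s y)) *\<^sub>R X3 y"

definition DL :: "real \<Rightarrow> real \<Rightarrow> real \<Rightarrow> real \<Rightarrow> real \<Rightarrow> real \<Rightarrow> real \<Rightarrow> real \<Rightarrow> real" where
  "DL P Q R lam s dp dq dr = (P * dp + Q * dq + s * s * R * dr) / lam"

lemma Nuf_deriv: assumes G: "(G has_derivative (\<lambda>h. Mx *v h)) (at x)" and pos: "lamf G s x > 0"
  shows "(Nuf G s has_derivative (\<lambda>h. fv
     (dquot (Pf G x) (lamf G s x) (dPf G Mx x h) (DL (Pf G x) (Qf G x) (Rf G x) (lamf G s x) s (dPf G Mx x h) (dQf G Mx x h) (dRf G Mx x h)))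
     (dquot (Qf G x) (lamf G s x) (dQf G Mx x h) (DL (Pf G x) (Qf G x) (Rf G x) (lamf G s x) s (dPf G Mx x h) (dQf G Mx x h) (dRf G Mx x h))
        + s * s * (Rf G x / lamf G s x) * h$3)
     (s * s * dquot (Rf G x) (lamf G s x) (dRf G Mx x h) (DL (Pf G x) (Qf G x) (Rf G x) (lamf G s x) s (dPf G Mx x h) (dQf G Mx x h) (dRf G Mx x h))
        + (Qf G x / lamf G s x) * h$3) x)) (at x)"
proof -
  have ne: "lamf G s x \<noteq> 0" using pos by simp
  have Ld: "(lamf G s has_derivative (\<lambda>h. DL (Pf G x) (Qf G x) (Rf G x) (lamf G s x) s (dPf G Mx x h) (dQf G Mx x h) (dRf G Mx x h))) (at x)"
    using lamf_deriv[OF G pos] by (simp add: DL_def mult.assoc)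
  have A: "((\<lambda>y. Pf G y / lamf G s y) has_derivative (\<lambda>h. dquot (Pf G x) (lamf G s x) (dPf G Mx x h) (DL (Pf G x) (Qf G x) (Rf G x) (lamf G s x) s (dPf G Mx x h) (dQf G Mx x h) (dRf G Mx x h)))) (at x)"
    by (rule quot_deriv[OF Pf_deriv[OF G] Ld ne])
  have B: "((\<lambda>y. Qf G y / lamf G s y) has_derivative (\<lambda>h. dquot (Qf G x) (lamf G s x) (dQf G Mx x h) (DL (Pf G x) (Qf G x) (Rf G x) (lamf G s x) s (dPf G Mx x h) (dQf G Mx x h) (dRf G Mx x h)))) (at x)"
    by (rule quot_deriv[OF Qf_deriv[OF G] Ld ne])
  have C: "((\<lambda>y. Rf G y / lamf G s y) has_derivative (\<lambda>h. dquot (Rf G x) (lamf G s x) (dRf G Mx x h) (DL (Pf G x) (Qf G x) (Rf G x) (lamf G s x) s (dPf G Mx x h) (dQf G Mx x h) (dRf G Mx x h)))) (at x)"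
    by (rule quot_deriv[OF Rf_deriv[OF G] Ld ne])
  show ?thesis
    unfolding Nuf_def[abs_def]
    apply (rule has_derivative_eq_rhs)
     apply (rule has_derivative_add[OF has_derivative_add[OF has_derivative_scaleR[OF A X1_deriv] has_derivative_scaleR[OF B X2_deriv]] has_derivative_scaleR[OF has_derivative_mult_right[OF C] X3_deriv]])
    apply (rule ext)
    apply (simp add: fv_def algebra_simps)
    done
qed



lemma term_fv:
  assumes "L \<noteq> 0" and "E x = fv k1 k2 k3 x" and "dd Nu x (fv k1 k2 k3 x) = fv d1 d2 d3 x"
    and "Nu x = fv A B C x"
  shows "gL L x (nablaL L E Nu x) (E x) = k1 * d1 + k2 * d2 + L * k3 * d3 - (1+L) * A * k2 * k3"
  unfolding conn[OF assms(1)] using assms(2-4)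
  by (simp add: gL_fv Bf_fv Bf_sym[of L x "fv k1 k2 k3 x"] algebra_simps)

definition lin :: "real \<Rightarrow> real \<Rightarrow> real \<Rightarrow> real \<Rightarrow> real \<Rightarrow> real \<Rightarrow> real" where
  "lin a1 a2 a3 k1 k2 k3 = k1 * a1 + k2 * a2 + k3 * a3"

lemma dPf_fv: "dPf G Mx x (fv k1 k2 k3 x) = lin (dPf G Mx x (X1 x)) (dPf G Mx x (X2 x)) (dPf G Mx x (X3 x)) k1 k2 k3"
  unfolding dPf_def lin_def fv_def
  by (simp add: matrix_vector_right_distrib matrix_vector_mult_scaleR inner_add_left)
lemma dQf_fv: "dQf G Mx x (fv k1 k2 k3 x) = lin (dQf G Mx x (X1 x)) (dQf G Mx x (X2 x)) (dQf G Mx x (X3 x)) k1 k2 k3"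
  unfolding dQf_def lin_def fv_def
  by (simp add: matrix_vector_right_distrib matrix_vector_mult_scaleR inner_add_left X1_def X2_def X3_def algebra_simps)
lemma dRf_fv: "dRf G Mx x (fv k1 k2 k3 x) = lin (dRf G Mx x (X1 x)) (dRf G Mx x (X2 x)) (dRf G Mx x (X3 x)) k1 k2 k3"
  unfolding dRf_def lin_def fv_def
  by (simp add: matrix_vector_right_distrib matrix_vector_mult_scaleR inner_add_left X1_def X2_def X3_def algebra_simps)

definition Tm :: "real \<Rightarrow> real \<Rightarrow> real \<Rightarrow> real \<Rightarrow> real \<Rightarrow> real \<Rightarrow> real \<Rightarrow> real \<Rightarrow> real \<Rightarrow> real \<Rightarrow> real \<Rightarrow> real \<Rightarrow> real" where
  "Tm L P Q R lam s dp dq dr k1 k2 k3 =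
     k1 * dquot P lam dp (DL P Q R lam s dp dq dr)
   + k2 * (dquot Q lam dq (DL P Q R lam s dp dq dr) + s * s * (R / lam) * k1)
   + L * k3 * (s * s * dquot R lam dr (DL P Q R lam s dp dq dr) + Q / lam * k1)
   - (1+L) * (P/lam) * k2 * k3"

definition Phi2 :: "real \<Rightarrow> real \<Rightarrow> real \<Rightarrow> real \<Rightarrow> real \<Rightarrow> real \<Rightarrow> real \<Rightarrow> real \<Rightarrow> real \<Rightarrow> real" where
  "Phi2 P Q R lam l s dp dq dr =
     (s * R/lam * (P/l)) * dquot P lam dp (DL P Q R lam s dp dq dr)
   + (s * R/lam * (Q/l)) * (dquot Q lam dq (DL P Q R lam s dp dq dr) + s * s * (R / lam) * (s * R/lam * (P/l)))
   - s * (l/lam) * dquot R lam dr (DL P Q R lam s dp dq dr)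
   + s * s * P * Q * R / lam^3"

lemma Tm_e2:
  assumes "s \<noteq> 0" "L * (s * s) = 1" "lam \<noteq> 0" "l \<noteq> 0"
  shows "Tm L P Q R lam s dp dq dr (s * R/lam * (P/l)) (s * R/lam * (Q/l)) (-(l/lam) * s) = Phi2 P Q R lam l s dp dq dr"
proof -
  have L: "L = 1 / (s * s)" using assms(1,2) by (simp add: field_simps)
  show ?thesis unfolding Tm_def Phi2_def L using assms(1,3,4)
    by (simp add: field_simps power3_eq_cube)
qed

definition lamS :: "real \<Rightarrow> real \<Rightarrow> real \<Rightarrow> real \<Rightarrow> real" where
  "lamS P Q R s = sqrt (P\<^sup>2 + Q\<^sup>2 + (s * R)\<^sup>2)"

definition Phi where
  "Phi P Q R a1 a2 a3 b1 b2 b3 c1 c2 c3 s =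
    Tm 0 P Q R (lamS P Q R s) s (lin a1 a2 a3 (Q / lamS P Q R 0) (- P / lamS P Q R 0) 0)
      (lin b1 b2 b3 (Q / lamS P Q R 0) (- P / lamS P Q R 0) 0)
      (lin c1 c2 c3 (Q / lamS P Q R 0) (- P / lamS P Q R 0) 0) (Q / lamS P Q R 0) (- P / lamS P Q R 0) 0
  + Phi2 P Q R (lamS P Q R s) (lamS P Q R 0) s
      (lin a1 a2 a3 (s * R/lamS P Q R s * (P/lamS P Q R 0)) (s * R/lamS P Q R s * (Q/lamS P Q R 0)) (-(lamS P Q R 0/lamS P Q R s) * s))
      (lin b1 b2 b3 (s * R/lamS P Q R s * (P/lamS P Q R 0)) (s * R/lamS P Q R s * (Q/lamS P Q R 0)) (-(lamS P Q R 0/lamS P Q R s) * s))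
      (lin c1 c2 c3 (s * R/lamS P Q R s * (P/lamS P Q R 0)) (s * R/lamS P Q R s * (Q/lamS P Q R 0)) (-(lamS P Q R 0/lamS P Q R s) * s))"

lemma Phi_cont: assumes "P\<^sup>2 + Q\<^sup>2 > 0" shows "isCont (Phi P Q R a1 a2 a3 b1 b2 b3 c1 c2 c3) 0"
proof -
  have "P\<^sup>2 + Q\<^sup>2 \<noteq> 0" using assms by linarith
  then have ne: "sqrt (P\<^sup>2 + Q\<^sup>2) \<noteq> 0" by simp
  show ?thesis
    unfolding Phi_def Tm_def Phi2_def dquot_def DL_def lin_def lamS_def
    by (intro continuous_intros; use ne in simp)
qed

lemma Phi_zero: assumes "P\<^sup>2 + Q\<^sup>2 > 0"
  shows "Phi P Q R a1 a2 a3 b1 b2 b3 c1 c2 c3 0 =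
     dquot P (sqrt (P\<^sup>2 + Q\<^sup>2)) a1 ((P * a1 + Q * b1) / sqrt (P\<^sup>2 + Q\<^sup>2))
   + dquot Q (sqrt (P\<^sup>2 + Q\<^sup>2)) b2 ((P * a2 + Q * b2) / sqrt (P\<^sup>2 + Q\<^sup>2))"
proof -
  define l where "l = sqrt (P\<^sup>2 + Q\<^sup>2)"
  have l0: "l > 0" using assms by (simp add: l_def)
  have ll: "l^2 = P\<^sup>2 + Q\<^sup>2" using assms by (simp add: l_def)
  have e: "lamS P Q R 0 = l" by (simp add: lamS_def l_def)
  show ?thesis
    unfolding Phi_def Tm_def Phi2_def e l_def[symmetric]
    unfolding dquot_def DL_def lin_def using l0
    apply (simp add: field_simps)
    using ll by algebra
qed




lemma ddu_eq: assumes "\<forall>y. (u has_derivative (\<lambda>h. G y \<bullet> h)) (at y)"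
  shows "dd u y v = G y \<bullet> v"
  unfolding dd_def frechet_derivative_at[OF assms[rule_format, of y], symmetric] by simp

lemma pp_eq: assumes "\<forall>y. (u has_derivative (\<lambda>h. G y \<bullet> h)) (at y)" shows "pp u = Pf G"
  by (rule ext) (simp add: pp_def ddu_eq[OF assms] Pf_def)
lemma qq_eq: assumes "\<forall>y. (u has_derivative (\<lambda>h. G y \<bullet> h)) (at y)" shows "qq u = Qf G"
  by (rule ext) (simp add: qq_def ddu_eq[OF assms] Qf_def)
lemma rr_eq: assumes "\<forall>y. (u has_derivative (\<lambda>h. G y \<bullet> h)) (at y)"
  shows "rr L u = (\<lambda>y. (1 / sqrt L) * Rf G y)"
  by (rule ext) (simp add: rr_def ddu_eq[OF assms] Rf_def X3t_def)
lemma ll_eq: assumes "\<forall>y. (u has_derivative (\<lambda>h. G y \<bullet> h)) (at y)" shows "ll u = lamf G 0"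
  by (rule ext) (simp add: ll_def lamf_def pp_eq[OF assms] qq_eq[OF assms])
lemma lL_eq: assumes "\<forall>y. (u has_derivative (\<lambda>h. G y \<bullet> h)) (at y)" shows "lL L u = lamf G (1 / sqrt L)"
  by (rule ext) (simp add: lL_def lamf_def pp_eq[OF assms] qq_eq[OF assms] rr_eq[OF assms])
lemma nu_eq: assumes "\<forall>y. (u has_derivative (\<lambda>h. G y \<bullet> h)) (at y)" shows "nuL L u = Nuf G (1 / sqrt L)"
  by (rule ext) (simp add: nuL_def Nuf_def pbarL_def qbarL_def rbarL_def pp_eq[OF assms] qq_eq[OF assms]
      rr_eq[OF assms] lL_eq[OF assms] X3t_def)

lemma lamf_lamS: "lamf G s x = lamS (Pf G x) (Qf G x) (Rf G x) s"
  by (simp add: lamf_def lamS_def)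

lemma PQ_pos: assumes "\<forall>y. (u has_derivative (\<lambda>h. G y \<bullet> h)) (at y)" and "ll u x \<noteq> 0"
  shows "(Pf G x)\<^sup>2 + (Qf G x)\<^sup>2 > 0"
proof -
  have "lamf G 0 x \<noteq> 0" using assms(2) ll_eq[OF assms(1)] by simp
  then have "(Pf G x)\<^sup>2 + (Qf G x)\<^sup>2 \<noteq> 0" unfolding lamf_lamS lamS_def by auto
  moreover have "(Pf G x)\<^sup>2 + (Qf G x)\<^sup>2 \<ge> 0" by simp
  ultimately show ?thesis by linarith
qed

lemma HL_eq:
  assumes uG: "\<forall>y. (u has_derivative (\<lambda>h. G y \<bullet> h)) (at y)"
    and GM: "\<forall>y. (G has_derivative (\<lambda>h. M y *v h)) (at y)"
    and PQ: "(Pf G x)\<^sup>2 + (Qf G x)\<^sup>2 > 0" and L0: "L > 0"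
  shows "HL L u x = Phi (Pf G x) (Qf G x) (Rf G x)
     (dPf G (M x) x (X1 x)) (dPf G (M x) x (X2 x)) (dPf G (M x) x (X3 x))
     (dQf G (M x) x (X1 x)) (dQf G (M x) x (X2 x)) (dQf G (M x) x (X3 x))
     (dRf G (M x) x (X1 x)) (dRf G (M x) x (X2 x)) (dRf G (M x) x (X3 x)) (1 / sqrt L)"
proof -
  note pp = pp_eq[OF uG] and qq = qq_eq[OF uG] and rr = rr_eq[OF uG] and ll = ll_eq[OF uG]
    and lL = lL_eq[OF uG] and nu = nu_eq[OF uG]
  define P where "P = Pf G x"
  define Q where "Q = Qf G x"
  define R where "R = Rf G x"
  define l where "l = lamf G 0 x"
  have lS: "lamf G s x = lamS P Q R s" for s by (simp add: lamf_def lamS_def P_def Q_def R_def)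
  have lpos: "l > 0" unfolding l_def lS lamS_def using PQ by (simp add: P_def Q_def)
  have lE: "lamf G 0 x = l" by (simp add: l_def)
  note defs = P_def[symmetric] Q_def[symmetric] R_def[symmetric] lE
  define a1 where "a1 = dPf G (M x) x (X1 x)"
  define a2 where "a2 = dPf G (M x) x (X2 x)"
  define a3 where "a3 = dPf G (M x) x (X3 x)"
  define b1 where "b1 = dQf G (M x) x (X1 x)"
  define b2 where "b2 = dQf G (M x) x (X2 x)"
  define b3 where "b3 = dQf G (M x) x (X3 x)"
  define c1 where "c1 = dRf G (M x) x (X1 x)"
  define c2 where "c2 = dRf G (M x) x (X2 x)"
  define c3 where "c3 = dRf G (M x) x (X3 x)"
  note fvs = dPf_fv dQf_fv dRf_fv
  define s where "s = 1 / sqrt L"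
  have Lne: "L \<noteq> 0" using L0 by simp
  have s0: "s > 0" using L0 by (simp add: s_def)
  have Ls: "L * (s * s) = 1" using L0 by (simp add: s_def)
  define lam where "lam = lamS P Q R s"
  have laml: "lam \<ge> l" unfolding lam_def l_def lS lamS_def by simp
  have lampos: "lamf G s x > 0" using laml lpos lS lam_def by simp
  have lamE: "lamf G s x = lam" by (simp add: lam_def lS)
  note D = frechet_derivative_at[OF Nuf_deriv[OF GM[rule_format, of x] lampos]]
  have dnu: "dd (nuL L u) x (fv k1 k2 k3 x) = fv
     (dquot P lam (lin a1 a2 a3 k1 k2 k3) (DL P Q R lam s (lin a1 a2 a3 k1 k2 k3) (lin b1 b2 b3 k1 k2 k3) (lin c1 c2 c3 k1 k2 k3)))
     (dquot Q lam (lin b1 b2 b3 k1 k2 k3) (DL P Q R lam s (lin a1 a2 a3 k1 k2 k3) (lin b1 b2 b3 k1 k2 k3) (lin c1 c2 c3 k1 k2 k3)) + s * s * (R / lam) * k1)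
     (s * s * dquot R lam (lin c1 c2 c3 k1 k2 k3) (DL P Q R lam s (lin a1 a2 a3 k1 k2 k3) (lin b1 b2 b3 k1 k2 k3) (lin c1 c2 c3 k1 k2 k3)) + Q / lam * k1) x"
    for k1 k2 k3
    unfolding dd_def nu s_def[symmetric] D[symmetric]
    by (simp add: fvs a1_def[symmetric] a2_def[symmetric] a3_def[symmetric] b1_def[symmetric] b2_def[symmetric] b3_def[symmetric] c1_def[symmetric] c2_def[symmetric] c3_def[symmetric] defs lamE)
  have nux: "nuL L u x = fv (P / lam) (Q / lam) (s * s * (R / lam)) x"
    by (simp add: nu s_def[symmetric] Nuf_def fv_def defs lamE)
  have e1x: "e1 u x = fv (Q / l) (- P / l) 0 x"
    by (simp add: e1_def fv_def qbar_def pbar_def pp qq ll defs)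
  have e2x: "e2 L u x = fv (s * R / lam * (P / l)) (s * R / lam * (Q / l)) (- (l / lam) * s) x"
    by (simp add: e2_def fv_def rbarL_def pbar_def qbar_def pp qq ll rr lL X3t_def s_def[symmetric] defs lamE)
  have T1: "gL L x (nablaL L (e1 u) (nuL L u) x) (e1 u x) =
     Tm 0 P Q R lam s (lin a1 a2 a3 (Q / l) (- P / l) 0) (lin b1 b2 b3 (Q / l) (- P / l) 0)
       (lin c1 c2 c3 (Q / l) (- P / l) 0) (Q / l) (- P / l) 0"
    by (subst term_fv[where E="e1 u" and Nu="nuL L u", OF Lne e1x dnu nux]) (simp add: Tm_def)
  have T2: "gL L x (nablaL L (e2 L u) (nuL L u) x) (e2 L u x) =
     Tm L P Q R lam s (lin a1 a2 a3 (s * R / lam * (P / l)) (s * R / lam * (Q / l)) (- (l / lam) * s))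
       (lin b1 b2 b3 (s * R / lam * (P / l)) (s * R / lam * (Q / l)) (- (l / lam) * s))
       (lin c1 c2 c3 (s * R / lam * (P / l)) (s * R / lam * (Q / l)) (- (l / lam) * s))
       (s * R / lam * (P / l)) (s * R / lam * (Q / l)) (- (l / lam) * s)"
    by (subst term_fv[where E="e2 L u" and Nu="nuL L u", OF Lne e2x dnu nux]) (simp add: Tm_def algebra_simps)
  have "HL L u x = Phi P Q R a1 a2 a3 b1 b2 b3 c1 c2 c3 s"
    unfolding HL_def T1 T2 Phi_def lam_def[symmetric]
    using Tm_e2[OF _ Ls, of lam l] s0 lampos lpos
    by (simp add: l_def lS lam_def)
  then show ?thesis by (simp add: s_def P_def Q_def R_def a1_def a2_def a3_def b1_def b2_def b3_def c1_def c2_def c3_def)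
qed

theorem proposition6p4:
  fixes u :: "real ^ 3 \<Rightarrow> real" and x :: "real ^ 3"
  assumes "regular_surface_fn u"
    and "u x = 0"
    and "ll u x \<noteq> 0"
  shows "((\<lambda>L. HL L u x) \<longlongrightarrow> dd (pbar u) x (X1 x) + dd (qbar u) x (X2 x)) at_top"
proof -
  obtain G M where uG: "\<forall>y. (u has_derivative (\<lambda>h. G y \<bullet> h)) (at y)"
    and GM: "\<forall>y. (G has_derivative (\<lambda>h. M y *v h)) (at y)"
    using assms(1) unfolding regular_surface_fn_def C2_def by blast
  note pp = pp_eq[OF uG] and qq = qq_eq[OF uG] and ll = ll_eq[OF uG]
  have PQ: "(Pf G x)\<^sup>2 + (Qf G x)\<^sup>2 > 0" by (rule PQ_pos[OF uG assms(3)])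
  define Ph where "Ph = Phi (Pf G x) (Qf G x) (Rf G x)
     (dPf G (M x) x (X1 x)) (dPf G (M x) x (X2 x)) (dPf G (M x) x (X3 x))
     (dQf G (M x) x (X1 x)) (dQf G (M x) x (X2 x)) (dQf G (M x) x (X3 x))
     (dRf G (M x) x (X1 x)) (dRf G (M x) x (X2 x)) (dRf G (M x) x (X3 x))"
  have lim_s: "((\<lambda>L::real. 1 / sqrt L) \<longlongrightarrow> 0) at_top"
    by (rule tendsto_divide_0[OF tendsto_const filterlim_at_top_imp_at_infinity[OF sqrt_at_top]])
  have lim: "((\<lambda>L. Ph (1 / sqrt L)) \<longlongrightarrow> Ph 0) at_top"
    unfolding Ph_def by (rule isCont_tendsto_compose[OF Phi_cont[OF PQ] lim_s])
  have ev: "eventually (\<lambda>L. Ph (1 / sqrt L) = HL L u x) at_top"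
    using eventually_gt_at_top[of 0] by eventually_elim (simp add: HL_eq[OF uG GM PQ] Ph_def)
  have lim2: "((\<lambda>L. HL L u x) \<longlongrightarrow> Ph 0) at_top"
    using tendsto_cong[OF ev] lim by simp
  have l0pos: "lamf G 0 x > 0" unfolding lamf_lamS lamS_def using PQ by simp
  have pb: "pbar u = (\<lambda>y. Pf G y / lamf G 0 y)" by (rule ext) (simp add: pbar_def pp ll)
  have qb: "qbar u = (\<lambda>y. Qf G y / lamf G 0 y)" by (rule ext) (simp add: qbar_def qq ll)
  have lne: "lamf G 0 x \<noteq> 0" using l0pos by simp
  note Dp = frechet_derivative_at[OF quot_deriv[OF Pf_deriv[OF GM[rule_format, of x]] lamf_deriv[OF GM[rule_format, of x] l0pos] lne]]
  note Dq = frechet_derivative_at[OF quot_deriv[OF Qf_deriv[OF GM[rule_format, of x]] lamf_deriv[OF GM[rule_format, of x] l0pos] lne]]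
  have tgt: "dd (pbar u) x (X1 x) + dd (qbar u) x (X2 x) = Ph 0"
    unfolding Ph_def Phi_zero[OF PQ] dd_def pb qb Dp[symmetric] Dq[symmetric]
    by (simp add: lamf_lamS lamS_def)
  show ?thesis using lim2 unfolding tgt .
qed

end
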